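(* Consider the three-link parallel network with unit demand and latencies $\ell_1(x_1)=x_1$, $\ell_2(x_2)=x_2$, $\ell_3(x_3)=\frac{x_3}{2}+\frac65$. Then every toll vector in the set $\left\{\left(t_1,\tfrac75-t_1,0\right)\ :\ \tfrac{24}{35}\le t_1\le\tfrac57\right\}$ is an uncapped subgame perfect Nash equilibrium; in particular $\mathcal{T}(\infty)$ contains infinitely many elements.
   Context: Flows $x\in\mathbb{R}^3_+$ with $x_1+x_2+x_3=1$. For tolls $t\in\mathbb{R}^3_+$, $x(t)$ is the unique Wardrop equilibrium for $t$ (for all $i,j$ with $x_i>0$: $\ell_i(x_i)+t_i\le\ell_j(x_j)+t_j$). Profit $\Pi_i(t)=t_ix_i(t)$. $\mathcal{T}(\infty)$: toll vectors $t\in\mathbb{R}^3_+$ such that for every $i$ and every $t'_i\ge0$, $\Pi_i(t_i,t_{-i})\ge\Pi_i(t'_i,t_{-i})$ (flow recomputed). Note that here the untolled Wardrop equilibrium does not have full support (link 3 is unused). *)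

theory Defs
  imports "HOL-Analysis.Analysis"
begin

text \<open>Three parallel links, indexed by the numeral type 3 (elements 1, 2, 3 where 3 = 0).
  Flows and tolls are vectors in real^3. Unit demand.\<close>

definition flows :: "(real^3) set" where
  "flows = {x. (\<forall>i. 0 \<le> x $ i) \<and> (\<Sum>i\<in>UNIV. x $ i) = 1}"

definition wardrop :: "(3 \<Rightarrow> real \<Rightarrow> real) \<Rightarrow> real^3 \<Rightarrow> real^3 \<Rightarrow> bool" where
  "wardrop l t x \<longleftrightarrow> x \<in> flows \<and>
     (\<forall>i j. 0 < x $ i \<longrightarrow> l i (x $ i) + t $ i \<le> l j (x $ j) + t $ j)"

definition eqflow :: "(3 \<Rightarrow> real \<Rightarrow> real) \<Rightarrow> real^3 \<Rightarrow> real^3" where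
  "eqflow l t = (THE x. wardrop l t x)"

definition profit :: "(3 \<Rightarrow> real \<Rightarrow> real) \<Rightarrow> 3 \<Rightarrow> real^3 \<Rightarrow> real" where
  "profit l i t = t $ i * eqflow l t $ i"

definition upd_toll :: "real^3 \<Rightarrow> 3 \<Rightarrow> real \<Rightarrow> real^3" where
  "upd_toll t i s = (\<chi> j. if j = i then s else t $ j)"

definition T_inf :: "(3 \<Rightarrow> real \<Rightarrow> real) \<Rightarrow> (real^3) set" where
  "T_inf l = {t. (\<forall>i. 0 \<le> t $ i) \<and>
     (\<forall>i s. 0 \<le> s \<longrightarrow> profit l i (upd_toll t i s) \<le> profit l i t)}"

definition lat :: "3 \<Rightarrow> real \<Rightarrow> real" where
  "lat i y = (if i = 1 then y else if i = 2 then y else y / 2 + 6 / 5)"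

end

theory Submission imports Defs begin

lemma lat_simps: "lat 1 y = y" "lat 2 y = y" "lat 3 y = y/2 + 6/5"
  by (simp_all add: lat_def)

lemma W: "wardrop lat t x \<longleftrightarrow>
  0 \<le> x$1 \<and> 0 \<le> x$2 \<and> 0 \<le> x$3 \<and> x$1 + x$2 + x$3 = 1 \<and>
  (0 < x$1 \<longrightarrow> x$1 + t$1 \<le> x$2 + t$2 \<and> x$1 + t$1 \<le> x$3/2 + 6/5 + t$3) \<and>
  (0 < x$2 \<longrightarrow> x$2 + t$2 \<le> x$1 + t$1 \<and> x$2 + t$2 \<le> x$3/2 + 6/5 + t$3) \<and>
  (0 < x$3 \<longrightarrow> x$3/2 + 6/5 + t$3 \<le> x$1 + t$1 \<and> x$3/2 + 6/5 + t$3 \<le> x$2 + t$2)"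
  unfolding wardrop_def flows_def forall_3 sum_3 lat_simps by auto

lemma uniq_aux:
  fixes x1 x2 x3 y1 y2 y3 t1 t2 t3 :: real
  assumes "0 \<le> x1" "0 \<le> x2" "0 \<le> x3" "x1 + x2 + x3 = 1"
  "0 < x1 \<longrightarrow> x1 + t1 \<le> x2 + t2 \<and> x1 + t1 \<le> x3/2 + 6/5 + t3"
  "0 < x2 \<longrightarrow> x2 + t2 \<le> x1 + t1 \<and> x2 + t2 \<le> x3/2 + 6/5 + t3"
  "0 < x3 \<longrightarrow> x3/2 + 6/5 + t3 \<le> x1 + t1 \<and> x3/2 + 6/5 + t3 \<le> x2 + t2"
  "0 \<le> y1" "0 \<le> y2" "0 \<le> y3" "y1 + y2 + y3 = 1"
  "0 < y1 \<longrightarrow> y1 + t1 \<le> y2 + t2 \<and> y1 + t1 \<le> y3/2 + 6/5 + t3"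
  "0 < y2 \<longrightarrow> y2 + t2 \<le> y1 + t1 \<and> y2 + t2 \<le> y3/2 + 6/5 + t3"
  "0 < y3 \<longrightarrow> y3/2 + 6/5 + t3 \<le> y1 + t1 \<and> y3/2 + 6/5 + t3 \<le> y2 + t2"
  shows "x1 = y1 \<and> x2 = y2 \<and> x3 = y3"
proof (rule ccontr)
  assume ne: "\<not> ?thesis"
  consider "x1 > y1" "x2 < y2" | "x1 > y1" "x3 < y3" | "x2 > y2" "x1 < y1" | "x2 > y2" "x3 < y3"
    | "x3 > y3" "x1 < y1" | "x3 > y3" "x2 < y2"
    using ne assms(4) assms(11) by linarith
  then show False using assms by cases linarith+
qed

lemma uniq: "wardrop lat t x \<Longrightarrow> wardrop lat t y \<Longrightarrow> x = y"
  unfolding W vec_eq_iff forall_3 using uniq_aux by blast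

lemma eqf: "wardrop lat t x \<Longrightarrow> eqflow lat t = x"
  unfolding eqflow_def using uniq by blast

lemma upd_same: "upd_toll t i s $ i = s" by (simp add: upd_toll_def)

lemma dev1:
  fixes a b s :: real and T :: "real^3"
  assumes ab: "a + b = 7/5" "24/35 \<le> a" "a \<le> 5/7" and s: "0 \<le> s"
    and T: "T$1 = s" "T$2 = b" "T$3 = 0"
  shows "s * eqflow lat T $ 1 \<le> a * (6/5 - a)"
proof -
  consider (A) "s \<le> a" | (B) "a < s" "s \<le> (17/5+b)/3" | (C) "(17/5+b)/3 < s" by linarith
  then show ?thesis
  proof cases
    case A
    let ?x = "vector [(1+b-s)/2, (1+s-b)/2, 0] :: real^3"
    have "wardrop lat T ?x" unfolding W using T ab s A by (simp add: field_simps)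
    then have e: "eqflow lat T $ 1 = (1+b-s)/2" by (simp add: eqf)
    have "0 \<le> (a-s)*(1+b-a-s)" using A ab by (intro mult_nonneg_nonneg) linarith+
    moreover have b: "b = 7/5 - a" using ab by linarith
    ultimately show ?thesis unfolding e b by (simp add: algebra_simps) (simp add: field_simps; linarith)
  next
    case B
    define C where "C = (17/5+s+b)/4"
    let ?x = "vector [C - s, C - b, 2*C - 12/5] :: real^3"
    have "wardrop lat T ?x" unfolding W vector_3 T C_def using ab s B by (simp add: field_simps)
    then have e: "eqflow lat T $ 1 = C - s" by (simp add: eqf)
    have "0 \<le> (s - a) * (3 * a + 3 * s - 17/5 - b)" using B ab by (intro mult_nonneg_nonneg) linarith+
    moreover have b: "b = 7/5 - a" using ab by linarith
    ultimately show ?thesis unfolding e C_def b by (simp add: algebra_simps) (simp add: field_simps; linarith)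
  next
    case C
    define z where "z = 2*(b-1/5)/3"
    let ?x = "vector [0, 1 - z, z] :: real^3"
    have "wardrop lat T ?x" unfolding W using T ab s C by (simp add: z_def field_simps)
    then have e: "eqflow lat T $ 1 = 0" by (simp add: eqf)
    have "0 \<le> a * (6/5 - a)" using ab by (intro mult_nonneg_nonneg) linarith+
    then show ?thesis unfolding e by simp
  qed
qed

lemma dev2:
  fixes a b s :: real and T :: "real^3"
  assumes ab: "a + b = 7/5" "24/35 \<le> a" "a \<le> 5/7" and s: "0 \<le> s"
    and T: "T$2 = s" "T$1 = b" "T$3 = 0"
  shows "s * eqflow lat T $ 2 \<le> a * (6/5 - a)"
proof -
  consider (A) "s \<le> a" | (B) "a < s" "s \<le> (17/5+b)/3" | (C) "(17/5+b)/3 < s" by linarith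
  then show ?thesis
  proof cases
    case A
    let ?x = "vector [(1+s-b)/2, (1+b-s)/2, 0] :: real^3"
    have "wardrop lat T ?x" unfolding W using T ab s A by (simp add: field_simps)
    then have e: "eqflow lat T $ 2 = (1+b-s)/2" by (simp add: eqf)
    have "0 \<le> (a-s)*(1+b-a-s)" using A ab by (intro mult_nonneg_nonneg) linarith+
    moreover have b: "b = 7/5 - a" using ab by linarith
    ultimately show ?thesis unfolding e b by (simp add: algebra_simps) (simp add: field_simps; linarith)
  next
    case B
    define C where "C = (17/5+s+b)/4"
    let ?x = "vector [C - b, C - s, 2*C - 12/5] :: real^3"
    have "wardrop lat T ?x" unfolding W vector_3 T C_def using ab s B by (simp add: field_simps)
    then have e: "eqflow lat T $ 2 = C - s" by (simp add: eqf)
    have "0 \<le> (s - a) * (3 * a + 3 * s - 17/5 - b)" using B ab by (intro mult_nonneg_nonneg) linarith+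
    moreover have b: "b = 7/5 - a" using ab by linarith
    ultimately show ?thesis unfolding e C_def b by (simp add: algebra_simps) (simp add: field_simps; linarith)
  next
    case C
    define z where "z = 2*(b-1/5)/3"
    let ?x = "vector [1 - z, 0, z] :: real^3"
    have "wardrop lat T ?x" unfolding W using T ab s C by (simp add: z_def field_simps)
    then have e: "eqflow lat T $ 2 = 0" by (simp add: eqf)
    have "0 \<le> a * (6/5 - a)" using ab by (intro mult_nonneg_nonneg) linarith+
    then show ?thesis unfolding e by simp
  qed
qed

lemma inT:
  fixes t1 :: real
  assumes "24/35 \<le> t1" "t1 \<le> 5/7"
  shows "vector [t1, 7/5 - t1, 0] \<in> T_inf lat"
proof -
  let ?t = "vector [t1, 7/5 - t1, 0] :: real^3"
  let ?x = "vector [6/5 - t1, t1 - 1/5, 0] :: real^3"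
  have "wardrop lat ?t ?x" unfolding W using assms by simp
  then have e: "eqflow lat ?t = ?x" by (rule eqf)
  have p1: "profit lat 1 ?t = t1 * (6/5 - t1)" unfolding profit_def e by simp
  have p2: "profit lat 2 ?t = (7/5 - t1) * (6/5 - (7/5 - t1))" unfolding profit_def e by simp
  have p3: "profit lat 3 ?t = 0" unfolding profit_def e by simp
  have "profit lat i (upd_toll ?t i s) \<le> profit lat i ?t" if s: "0 \<le> s" for i s
  proof -
    have "i = 1 \<or> i = 2 \<or> i = 3" using exhaust_3 by blast
    moreover
    { assume i: "i = 1"
      have "s * eqflow lat (upd_toll ?t 1 s) $ 1 \<le> t1 * (6/5 - t1)"
        by (rule dev1[of t1 "7/5 - t1"]) (use assms s in \<open>auto simp: upd_toll_def\<close>)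
      then have ?thesis unfolding i p1 unfolding profit_def by (simp add: upd_same) }
    moreover
    { assume i: "i = 2"
      have "s * eqflow lat (upd_toll ?t 2 s) $ 2 \<le> (7/5 - t1) * (6/5 - (7/5 - t1))"
        by (rule dev2[of "7/5 - t1" t1]) (use assms s in \<open>auto simp: upd_toll_def\<close>)
      then have ?thesis unfolding i p2 unfolding profit_def by (simp add: upd_same) }
    moreover
    { assume i: "i = 3"
      have "wardrop lat (upd_toll ?t 3 s) ?x" unfolding W using assms s by (simp add: upd_toll_def)
      then have "eqflow lat (upd_toll ?t 3 s) = ?x" by (rule eqf)
      then have ?thesis unfolding i p3 profit_def by simp }
    ultimately show ?thesis by blast
  qed
  moreover have "\<forall>i. 0 \<le> ?t $ i" unfolding forall_3 using assms by simp
  ultimately show ?thesis unfolding T_inf_def by blast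
qed

theorem mainTheorem13:
  shows "(\<forall>t1::real. 24/35 \<le> t1 \<and> t1 \<le> 5/7 \<longrightarrow>
            vector [t1, 7/5 - t1, 0] \<in> T_inf lat)
         \<and> infinite (T_inf lat)"
proof
  show A: "\<forall>t1::real. 24/35 \<le> t1 \<and> t1 \<le> 5/7 \<longrightarrow> vector [t1, 7/5 - t1, 0] \<in> T_inf lat"
    using inT by blast
  let ?f = "\<lambda>t1::real. vector [t1, 7/5 - t1, 0] :: real^3"
  have inj: "inj_on ?f {24/35..5/7}"
    by (rule inj_onI) (metis vector_3(1))
  have "?f ` {24/35..5/7} \<subseteq> T_inf lat" using A by auto
  moreover have "infinite (?f ` {24/35..5/7})"
  proof
    assume "finite (?f ` {24/35..5/7})"
    then have "finite {24/35..5/7::real}" using finite_imageD[OF _ inj] by blast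
    moreover have "infinite {24/35..5/7::real}" by (rule infinite_Icc) simp
    ultimately show False by blast
  qed
  ultimately show "infinite (T_inf lat)" using finite_subset by blast
qed

end
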